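(* Let $n\ge2$ and let $g\ge0$ be an integer with $\gcd(n,g)=1$. Then: (i) $\det g\text{-}circ(F_1,\dots,F_n)=\det Q_g\cdot\left[(1-F_{n+1})^{n-1}+F_n^{n-2}\sum_{i=1}^{n-1}F_i\left(\frac{1-F_{n+1}}{F_n}\right)^{i-1}\right]$; (ii) $\det g\text{-}circ(L_1,\dots,L_n)=\det Q_g\cdot\left[(1-L_{n+1})^{n-1}+(L_n-2)^{n-2}\sum_{i=1}^{n-1}(L_{i+2}-3L_{i+1})\left(\frac{1-L_{n+1}}{L_n-2}\right)^{i-1}\right]$; (iii) $\det g\text{-}circ(P_1,\dots,P_n)=\det Q_g\cdot\left[(1-P_{n+1})^{n-1}+P_n^{n-2}\sum_{i=1}^{n-1}P_i\left(\frac{1-P_{n+1}}{P_n}\right)^{i-1}\right]$; (iv) $\det g\text{-}circ(J_1,\dots,J_n)=\det Q_g\cdot\left[(1-J_{n+1})^{n-1}+2^{n-1}J_n^{n-2}\sum_{i=1}^{n-1}J_i\left(\frac{1-J_{n+1}}{2J_n}\right)^{i-1}\right]$.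
   Context: Fibonacci: $F_0=0,F_1=1,F_{m+2}=F_{m+1}+F_m$. Lucas: $L_0=2,L_1=1,L_{m+2}=L_{m+1}+L_m$. Pell: $P_0=0,P_1=1,P_{m+2}=2P_{m+1}+P_m$. Jacobsthal: $J_0=0,J_1=1,J_{m+2}=J_{m+1}+2J_m$. For $n\ge1$, an integer $g\ge 0$ and numbers $a_0,\dots,a_{n-1}$, the $g$-circulant matrix $g\text{-}circ(a_0,\dots,a_{n-1})$ is the $n\times n$ matrix whose $(i,j)$ entry ($0\le i,j\le n-1$) is $a_{(j-ig)\bmod n}$. $Q_g:=g\text{-}circ(1,0,\dots,0)$, i.e. the $n\times n$ matrix whose $(i,j)$ entry is $1$ if $j\equiv ig \pmod n$ and $0$ otherwise. *)

theory Defs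
  imports "Jordan_Normal_Form.Determinant"
begin

fun fibo :: "nat \<Rightarrow> real" where
  "fibo 0 = 0" | "fibo (Suc 0) = 1" | "fibo (Suc (Suc m)) = fibo (Suc m) + fibo m"

fun lucas :: "nat \<Rightarrow> real" where
  "lucas 0 = 2" | "lucas (Suc 0) = 1" | "lucas (Suc (Suc m)) = lucas (Suc m) + lucas m"

fun pell :: "nat \<Rightarrow> real" where
  "pell 0 = 0" | "pell (Suc 0) = 1" | "pell (Suc (Suc m)) = 2 * pell (Suc m) + pell m"

fun jacobsthal :: "nat \<Rightarrow> real" where
  "jacobsthal 0 = 0" | "jacobsthal (Suc 0) = 1"
| "jacobsthal (Suc (Suc m)) = jacobsthal (Suc m) + 2 * jacobsthal m"

definition gcirc :: "nat \<Rightarrow> nat \<Rightarrow> (nat \<Rightarrow> real) \<Rightarrow> real mat" where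
  "gcirc n g a = mat n n (\<lambda>(i, j). a (nat ((int j - int i * int g) mod int n)))"

definition Qg :: "nat \<Rightarrow> nat \<Rightarrow> real mat" where
  "Qg n g = gcirc n g (\<lambda>k. if k = 0 then 1 else 0)"

end

theory Submission
  imports Defs
begin

lemma mult_entry:
  assumes "A \<in> carrier_mat n n" "B \<in> carrier_mat n n" "i < n" "j < n"
  shows "(A * B) $$ (i,j) = (\<Sum>k\<in>{0..<n}. A $$ (i,k) * B $$ (k,j))"
  using assms by (simp add: scalar_prod_def)

lemma ci_eq:
  assumes "i < n" "j < n"
  shows "nat ((int j - int i) mod int n) = (if i \<le> j then j - i else j + n - i)"
proof (cases "i \<le> j")
  case True
  then have "(int j - int i) mod int n = int j - int i"
    using assms by (intro mod_pos_pos_trivial) auto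
  then show ?thesis using True by simp
next
  case False
  have "(int j - int i) mod int n = (int j - int i + int n) mod int n" by simp
  also have "\<dots> = int j - int i + int n"
    using assms False by (intro mod_pos_pos_trivial) auto
  finally show ?thesis using False assms by simp
qed

lemma gcirc_factor:
  assumes n: "n > 0"
  shows "gcirc n g a = Qg n g * gcirc n 1 a"
proof (rule eq_matI)
  fix i j assume i: "i < dim_row (Qg n g * gcirc n 1 a)" and j: "j < dim_col (Qg n g * gcirc n 1 a)"
  then have i: "i < n" and j: "j < n" by (auto simp: Qg_def gcirc_def)
  define k0 where "k0 = nat ((int i * int g) mod int n)"
  have k0: "k0 < n" using n unfolding k0_def by (simp add: nat_less_iff)
  have k0i: "int k0 = (int i * int g) mod int n" unfolding k0_def using n by simp
  have "(Qg n g * gcirc n 1 a) $$ (i,j) =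
     (\<Sum>k\<in>{0..<n}. (if k = k0 then gcirc n 1 a $$ (k0, j) else 0))"
  proof -
    have "(Qg n g * gcirc n 1 a) $$ (i,j) = (\<Sum>k\<in>{0..<n}. Qg n g $$ (i,k) * gcirc n 1 a $$ (k,j))"
      by (rule mult_entry[of _ n]) (auto simp: Qg_def gcirc_def i j)
    also have "\<dots> = (\<Sum>k\<in>{0..<n}. (if k = k0 then gcirc n 1 a $$ (k0, j) else 0))"
    proof (rule sum.cong[OF refl])
      fix k assume k: "k \<in> {0..<n}"
      have "(nat ((int k - int i * int g) mod int n) = 0) = (k = k0)"
      proof -
        have "(nat ((int k - int i * int g) mod int n) = 0) = ((int k - int i * int g) mod int n = 0)"
          using n by (simp add: nat_eq_iff)
        also have "\<dots> = (int k mod int n = (int i * int g) mod int n)"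
          by (simp add: mod_eq_dvd_iff dvd_eq_mod_eq_0[symmetric])
        also have "int k mod int n = int k" using k by simp
        finally show ?thesis using k0i by linarith
      qed
      then show "Qg n g $$ (i,k) * gcirc n 1 a $$ (k,j) = (if k = k0 then gcirc n 1 a $$ (k0, j) else 0)"
        using k i by (auto simp: Qg_def gcirc_def)
    qed
    finally show ?thesis .
  qed
  also have "\<dots> = gcirc n 1 a $$ (k0, j)" using k0 by simp
  also have "\<dots> = a (nat ((int j - int k0) mod int n))" using k0 j by (simp add: gcirc_def)
  also have "(int j - int k0) mod int n = (int j - int i * int g) mod int n"
    unfolding k0i by (simp add: mod_diff_right_eq)
  finally show "gcirc n g a $$ (i, j) = (Qg n g * gcirc n 1 a) $$ (i, j)"
    using i j by (simp add: gcirc_def)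
qed (auto simp: Qg_def gcirc_def)

lemma det_gcirc:
  assumes "n > 0"
  shows "det (gcirc n g a) = det (Qg n g) * det (gcirc n 1 a)"
  unfolding gcirc_factor[OF assms, of g a]
  by (rule det_mult[of _ n]) (auto simp: Qg_def gcirc_def)


lemma sum_delta3:
  fixes f :: "nat \<Rightarrow> real"
  assumes "i + 2 < n"
  shows "(\<Sum>k\<in>{0..<n}. (if k = i then a else if k = i+1 then b else if k = i+2 then c else 0) * f k)
         = a * f i + b * f (i+1) + c * f (i+2)"
proof -
  have "(\<Sum>k\<in>{0..<n}. (if k = i then a else if k = i+1 then b else if k = i+2 then c else 0) * f k)
      = (\<Sum>k\<in>{0..<n}. (if k = i then a * f i else 0) + (if k = i+1 then b * f (i+1) else 0)
           + (if k = i+2 then c * f (i+2) else 0))"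
    by (rule sum.cong) auto
  also have "\<dots> = a * f i + b * f (i+1) + c * f (i+2)"
    using assms by (simp add: sum.distrib)
  finally show ?thesis .
qed

lemma sum_delta2:
  fixes f :: "nat \<Rightarrow> real"
  assumes "i + 1 < n"
  shows "(\<Sum>k\<in>{0..<n}. (if k = i then a else if k = i+1 then b else 0) * f k)
         = a * f i + b * f (i+1)"
proof -
  have "(\<Sum>k\<in>{0..<n}. (if k = i then a else if k = i+1 then b else 0) * f k)
      = (\<Sum>k\<in>{0..<n}. (if k = i then a * f i else 0) + (if k = i+1 then b * f (i+1) else 0))"
    by (rule sum.cong) auto
  also have "\<dots> = a * f i + b * f (i+1)"
    using assms by (simp add: sum.distrib)
  finally show ?thesis .
qed


lemma det_circ_rec:
  fixes x :: "nat \<Rightarrow> real" and p q :: real and m :: nat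
  assumes x1: "x 1 = 1" and rec: "\<And>k. x (k+2) = p * x (k+1) + q * x k"
    and al0: "1 - x (m+3) \<noteq> 0"
  defines "al \<equiv> 1 - x (m+3)" and "be \<equiv> x 2 - p - q * x (m+2)"
  shows "det (gcirc (m+2) 1 (\<lambda>k. x (k+1))) =
     al ^ m * (\<Sum>k=0..m. (if k < m then x (k+3) - x 2 * x (k+2) else 1 - x 2 * x (m+2)) * (- be / al) ^ (m - k))"
proof -
  define n where "n = m + 2"
  define C where "C = gcirc n 1 (\<lambda>k. x (k+1))"
  define r where "r = - be / al"
  have alnz: "al \<noteq> 0" using al0 al_def by simp
  have Cc: "C \<in> carrier_mat n n" by (simp add: C_def gcirc_def)
  have Cx: "C $$ (i,j) = x ((if i \<le> j then j - i else j + n - i) + 1)" if "i < n" "j < n" for i j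
    using that ci_eq[OF that] by (simp add: C_def gcirc_def)
  have Cx': "C $$ (i,j) = x t" if "i < n" "j < n" "(if i \<le> j then j - i else j + n - i) + 1 = t" for i j t
    using Cx[OF that(1,2)] that(3) by simp
  have rec3: "x (s+3) - p * x (s+2) - q * x (s+1) = 0" for s
    using rec[of "s+1"] by (simp add: numeral_3_eq_3)
  define E where "E = mat n n (\<lambda>(i,j). if i < m then (if j = i then 1 else if j = i+1 then -p else if j = i+2 then -q else 0)
      else if i = m then (if j = m then 1 else if j = m+1 then - x 2 else 0) else (if j = i then 1 else (0::real)))"
  define M where "M = mat n n (\<lambda>(i,j). if i < m then (if j = i then al else if j = i+1 then be else 0)
      else if i = m then (if j < m then x (j+3) - x 2 * x (j+2) else if j = m then 1 - x 2 * x (m+2) else 0)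
      else (if j \<le> m then x (j+2) else 1))"
  define U where "U = mat n n (\<lambda>(i,j). if i \<le> j \<and> j \<le> m then r ^ (j - i) else if i = j then 1 else (0::real))"
  have Ec: "E \<in> carrier_mat n n" and Mc: "M \<in> carrier_mat n n" and Uc: "U \<in> carrier_mat n n"
    by (auto simp: E_def M_def U_def)
  have detE: "det E = 1"
  proof -
    have "det E = prod_list (diag_mat E)"
      by (rule det_upper_triangular[OF _ Ec]) (auto simp: E_def)
    also have "\<dots> = 1" unfolding prod_list_diag_prod using Ec by (auto simp: E_def intro!: prod.neutral)
    finally show ?thesis .
  qed
  have detU: "det U = 1"
  proof -
    have "det U = prod_list (diag_mat U)"
      by (rule det_upper_triangular[OF _ Uc]) (auto simp: U_def)
    also have "\<dots> = 1" unfolding prod_list_diag_prod using Uc by (auto simp: U_def intro!: prod.neutral)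
    finally show ?thesis .
  qed
  have EC: "E * C = M"
  proof (rule eq_matI)
    fix i j assume "i < dim_row M" "j < dim_col M"
    then have i: "i < n" and j: "j < n" by (auto simp: M_def)
    have e: "(E * C) $$ (i,j) = (\<Sum>k\<in>{0..<n}. E $$ (i,k) * C $$ (k,j))"
      by (rule mult_entry[OF Ec Cc i j])
    show "(E * C) $$ (i,j) = M $$ (i,j)"
    proof (cases "i < m")
      case True
      have "(E * C) $$ (i,j) = (\<Sum>k\<in>{0..<n}. (if k = i then 1 else if k = i+1 then -p else if k = i+2 then -q else 0) * C $$ (k,j))"
        unfolding e by (rule sum.cong) (use i in \<open>auto simp: E_def True n_def\<close>)
      also have "\<dots> = C $$ (i,j) - p * C $$ (i+1,j) - q * C $$ (i+2, j)"
        using True n_def by (subst sum_delta3) auto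
      also have "\<dots> = M $$ (i,j)"
      proof -
        have i1: "i+1 < n" "i+2 < n" using True n_def by auto
        consider "j = i" | "j = i+1" | "j < i" | "j \<ge> i+2" by linarith
        then show ?thesis
        proof cases
          case 1
          have "C $$ (i,j) - p * C $$ (i+1,j) - q * C $$ (i+2, j) = x 1 - p * x (m+2) - q * x (m+1)"
            using 1 i i1 True by (simp add: Cx n_def)
          also have "\<dots> = al"
          proof -
            have "x (m+3) = p * x (m+2) + q * x (m+1)" using rec[of "m+1"] by (simp add: numeral_3_eq_3)
            then show ?thesis using x1 unfolding al_def by linarith
          qed
          finally show ?thesis using 1 i True by (simp add: M_def)
        next
          case 2
          have "C $$ (i,j) - p * C $$ (i+1,j) - q * C $$ (i+2, j) = x 2 - p * x 1 - q * x (m+2)"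
            using 2 i i1 True by (simp add: Cx n_def numeral_2_eq_2)
          also have "\<dots> = be" using x1 by (simp add: be_def)
          finally show ?thesis using 2 j True by (simp add: M_def)
        next
          case 3
          define s where "s = j + m - i"
          have "C $$ (i,j) = x (s+3)" by (rule Cx') (use 3 i i1 j True in \<open>auto simp: n_def s_def\<close>)
          moreover have "C $$ (i+1,j) = x (s+2)" by (rule Cx') (use 3 i i1 j True in \<open>auto simp: n_def s_def\<close>)
          moreover have "C $$ (i+2,j) = x (s+1)" by (rule Cx') (use 3 i i1 j True in \<open>auto simp: n_def s_def\<close>)
          ultimately have "C $$ (i,j) - p * C $$ (i+1,j) - q * C $$ (i+2, j) = x (s+3) - p * x (s+2) - q * x (s+1)"
            by simp
          also have "\<dots> = 0" by (rule rec3)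
          finally show ?thesis using 3 i j True by (simp add: M_def)
        next
          case 4
          define s where "s = j - i - 2"
          have "C $$ (i,j) = x (s+3)" by (rule Cx') (use 4 i i1 j True in \<open>auto simp: n_def s_def\<close>)
          moreover have "C $$ (i+1,j) = x (s+2)" by (rule Cx') (use 4 i i1 j True in \<open>auto simp: n_def s_def\<close>)
          moreover have "C $$ (i+2,j) = x (s+1)" by (rule Cx') (use 4 i i1 j True in \<open>auto simp: n_def s_def\<close>)
          ultimately have "C $$ (i,j) - p * C $$ (i+1,j) - q * C $$ (i+2, j) = x (s+3) - p * x (s+2) - q * x (s+1)"
            by simp
          also have "\<dots> = 0" by (rule rec3)
          finally show ?thesis using 4 i j True by (simp add: M_def)
        qed
      qed
      finally show ?thesis .
    next
      case False
      show ?thesis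
      proof (cases "i = m")
        case True
        have "(E * C) $$ (i,j) = (\<Sum>k\<in>{0..<n}. (if k = m then 1 else if k = m+1 then - x 2 else 0) * C $$ (k,j))"
          unfolding e by (rule sum.cong) (use i in \<open>auto simp: E_def True n_def\<close>)
        also have "\<dots> = C $$ (m,j) - x 2 * C $$ (m+1,j)"
          using n_def by (subst sum_delta2) auto
        also have "\<dots> = M $$ (i,j)"
        proof -
          consider "j < m" | "j = m" | "j = m+1" using j n_def by linarith
          then show ?thesis
          proof cases
            case 1 then show ?thesis using True j by (simp add: Cx n_def M_def numeral_3_eq_3 numeral_2_eq_2)
          next
            case 2 then show ?thesis using True j x1 by (simp add: Cx n_def M_def numeral_2_eq_2)
          next
            case 3 then show ?thesis using True j x1 by (simp add: Cx n_def M_def numeral_2_eq_2)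
          qed
        qed
        finally show ?thesis .
      next
        case False2: False
        have im: "i = m+1" using False False2 i n_def by linarith
        have "(E * C) $$ (i,j) = (\<Sum>k\<in>{0..<n}. (if k = i then C $$ (i,j) else 0))"
          unfolding e by (rule sum.cong) (auto simp: E_def False False2 i)
        also have "\<dots> = C $$ (i,j)" using i by simp
        also have "\<dots> = M $$ (i,j)"
          using im j x1 n_def by (auto simp: Cx M_def)
        finally show ?thesis .
      qed
    qed
  qed (auto simp: E_def M_def C_def gcirc_def n_def)
  have rbe: "al * r + be = 0" unfolding r_def using alnz by simp
  have MU_low: "(M * U) $$ (i,j) = 0" if ij: "i < j" "j < n" for i j
  proof -
    have i: "i < n" using ij by simp
    have e: "(M * U) $$ (i,j) = (\<Sum>k\<in>{0..<n}. M $$ (i,k) * U $$ (k,j))"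
      by (rule mult_entry[OF Mc Uc i ij(2)])
    show ?thesis
    proof (cases "i < m")
      case True
      have "(M * U) $$ (i,j) = (\<Sum>k\<in>{0..<n}. (if k = i then al else if k = i+1 then be else 0) * U $$ (k,j))"
        unfolding e by (rule sum.cong) (use i in \<open>auto simp: M_def True\<close>)
      also have "\<dots> = al * U $$ (i,j) + be * U $$ (i+1,j)"
        using True n_def by (subst sum_delta2) auto
      also have "\<dots> = 0"
      proof (cases "j \<le> m")
        case True
        have "j - i = Suc (j - (i+1))" using ij by simp
        then have "al * U $$ (i,j) + be * U $$ (i+1,j) = (al * r + be) * r ^ (j - (i+1))"
          using True ij n_def by (simp add: U_def algebra_simps)
        then show ?thesis using rbe by simp
      next
        case False
        then show ?thesis using ij n_def \<open>i < m\<close> by (simp add: U_def)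
      qed
      finally show ?thesis .
    next
      case False
      then have im: "i = m" "j = m+1" using ij n_def by auto
      have "(M * U) $$ (i,j) = (\<Sum>k\<in>{0..<n}. (if k = j then M $$ (i,j) else 0))"
        unfolding e by (rule sum.cong) (use i ij in \<open>auto simp: U_def im\<close>)
      also have "\<dots> = 0" using im ij by (simp add: M_def)
      finally show ?thesis .
    qed
  qed
  have MU_diag: "(M * U) $$ (i,i) = (if i < m then al else if i = m then
       (\<Sum>k=0..m. (if k < m then x (k+3) - x 2 * x (k+2) else 1 - x 2 * x (m+2)) * r ^ (m - k)) else 1)"
    if i: "i < n" for i
  proof -
    have e: "(M * U) $$ (i,i) = (\<Sum>k\<in>{0..<n}. M $$ (i,k) * U $$ (k,i))"
      by (rule mult_entry[OF Mc Uc i i])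
    consider "i < m" | "i = m" | "i = m+1" using i n_def by linarith
    then show ?thesis
    proof cases
      case 1
      have "(M * U) $$ (i,i) = (\<Sum>k\<in>{0..<n}. (if k = i then al else if k = i+1 then be else 0) * U $$ (k,i))"
        unfolding e by (rule sum.cong) (use i 1 in \<open>auto simp: M_def\<close>)
      also have "\<dots> = al * U $$ (i,i) + be * U $$ (i+1,i)"
        using 1 n_def by (subst sum_delta2) auto
      also have "\<dots> = al" using 1 n_def by (simp add: U_def)
      finally show ?thesis using 1 by simp
    next
      case 2
      have "(M * U) $$ (i,i) = (\<Sum>k\<in>{0..<Suc m}. M $$ (i,k) * U $$ (k,i)) + M $$ (i, Suc m) * U $$ (Suc m, i)"
        unfolding e n_def by simp
      also have "\<dots> = (\<Sum>k\<in>{0..<Suc m}. M $$ (i,k) * U $$ (k,i))"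
        using 2 n_def by (simp add: U_def)
      also have "\<dots> = (\<Sum>k=0..m. (if k < m then x (k+3) - x 2 * x (k+2) else 1 - x 2 * x (m+2)) * r ^ (m - k))"
        unfolding atLeastLessThanSuc_atLeastAtMost
        by (rule sum.cong) (use 2 n_def in \<open>auto simp: U_def M_def\<close>)
      finally show ?thesis using 2 by simp
    next
      case 3
      have "(M * U) $$ (i,i) = (\<Sum>k\<in>{0..<n}. (if k = i then M $$ (i,i) else 0))"
        unfolding e by (rule sum.cong) (use i 3 n_def in \<open>auto simp: U_def\<close>)
      also have "\<dots> = 1" using 3 n_def by (simp add: M_def)
      finally show ?thesis using 3 by simp
    qed
  qed
  have "det C = det (E * C * U)"
    using det_mult[OF mult_carrier_mat[OF Ec Cc] Uc] det_mult[OF Ec Cc] detE detU by simp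
  also have "\<dots> = det (M * U)" using EC by simp
  also have "\<dots> = prod_list (diag_mat (M * U))"
    by (rule det_lower_triangular[of n]) (use MU_low Mc Uc in auto)
  also have "\<dots> = (\<Prod>i=0..<n. (M * U) $$ (i,i))"
    unfolding prod_list_diag_prod using Mc by simp
  also have "\<dots> = (\<Prod>i=0..<n. (if i < m then al else if i = m then
       (\<Sum>k=0..m. (if k < m then x (k+3) - x 2 * x (k+2) else 1 - x 2 * x (m+2)) * r ^ (m - k)) else 1))"
    by (rule prod.cong) (auto simp: MU_diag)
  also have "\<dots> = al ^ m * (\<Sum>k=0..m. (if k < m then x (k+3) - x 2 * x (k+2) else 1 - x 2 * x (m+2)) * r ^ (m - k))"
    unfolding n_def by (simp add: atLeastLessThanSuc prod.If_cases lessThan_def[symmetric] atLeast0LessThan)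
  finally show ?thesis unfolding C_def n_def r_def .
qed


lemma conv:
  fixes al c :: real and y :: "nat \<Rightarrow> real"
  assumes al: "al \<noteq> 0" and c: "c \<noteq> 0"
  shows "al ^ m * (\<Sum>k=0..m. (if k < m then y (k+1) else y (m+1) + al) * (c / al) ^ (m - k))
       = al ^ (m+1) + c ^ m * (\<Sum>i=1..m+1. y i * (al / c) ^ (i - 1))"
proof -
  have pw1: "al ^ m * (c / al) ^ (m - k) = al ^ k * c ^ (m - k)" if "k \<le> m" for k
  proof -
    have "al ^ m = al ^ k * al ^ (m - k)" using that by (simp add: power_add[symmetric])
    then show ?thesis using al by (simp add: power_divide)
  qed
  have pw2: "c ^ m * (al / c) ^ k = al ^ k * c ^ (m - k)" if "k \<le> m" for k
  proof -
    have "c ^ m = c ^ k * c ^ (m - k)" using that by (simp add: power_add[symmetric])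
    then show ?thesis using c by (simp add: power_divide)
  qed
  have "al ^ m * (\<Sum>k=0..m. (if k < m then y (k+1) else y (m+1) + al) * (c / al) ^ (m - k))
     = (\<Sum>k=0..m. (y (k+1) * (al ^ k * c ^ (m - k)) + (if k = m then al ^ (m+1) else 0)))"
    unfolding sum_distrib_left
  proof (rule sum.cong[OF refl])
    fix k assume k: "k \<in> {0..m}"
    show "al ^ m * ((if k < m then y (k + 1) else y (m + 1) + al) * (c / al) ^ (m - k)) =
          y (k + 1) * (al ^ k * c ^ (m - k)) + (if k = m then al ^ (m + 1) else 0)"
      using pw1[of k] k by (cases "k < m") (auto simp: algebra_simps)
  qed
  also have "\<dots> = (\<Sum>k=0..m. y (k+1) * (al ^ k * c ^ (m - k))) + al ^ (m+1)"
    by (simp add: sum.distrib)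
  also have "(\<Sum>k=0..m. y (k+1) * (al ^ k * c ^ (m - k))) = c ^ m * (\<Sum>k=0..m. y (k+1) * (al / c) ^ k)"
    unfolding sum_distrib_left by (rule sum.cong) (auto simp: pw2[symmetric] algebra_simps)
  also have "(\<Sum>k=0..m. y (k+1) * (al / c) ^ k) = (\<Sum>i=1..m+1. y i * (al / c) ^ (i - 1))"
    using sum.shift_bounds_cl_Suc_ivl[of "\<lambda>i. y i * (al / c) ^ (i - 1)" 0 m] by simp
  finally show ?thesis by simp
qed

lemma circ_final:
  fixes x y :: "nat \<Rightarrow> real" and p q :: real and m :: nat
  assumes x1: "x 1 = 1" and rec: "\<And>k. x (k+2) = p * x (k+1) + q * x k"
    and al0: "x (m+3) \<noteq> 1" and c0: "q * x (m+2) + p - x 2 \<noteq> 0"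
    and y: "\<And>i. 1 \<le> i \<Longrightarrow> i \<le> m+1 \<Longrightarrow> x (i+2) - x 2 * x (i+1) = y i"
  shows "det (gcirc (m+2) 1 (\<lambda>k. x (k+1))) = (1 - x (m+3)) ^ (m+1) +
     (q * x (m+2) + p - x 2) ^ m * (\<Sum>i=1..m+1. y i * ((1 - x (m+3)) / (q * x (m+2) + p - x 2)) ^ (i - 1))"
proof -
  let ?al = "1 - x (m+3)" and ?c = "q * x (m+2) + p - x 2"
  have r: "x (m+3) = p * x (m+2) + q * x (m+1)" using rec[of "m+1"] by (simp add: numeral_3_eq_3)
  have "det (gcirc (m+2) 1 (\<lambda>k. x (k+1))) =
     ?al ^ m * (\<Sum>k=0..m. (if k < m then x (k+3) - x 2 * x (k+2) else 1 - x 2 * x (m+2)) * (- (x 2 - p - q * x (m+2)) / ?al) ^ (m - k))"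
    by (rule det_circ_rec[OF x1 rec]) (use al0 in simp)
  also have "\<dots> = ?al ^ m * (\<Sum>k=0..m. (if k < m then y (k+1) else y (m+1) + ?al) * (?c / ?al) ^ (m - k))"
  proof -
    have "(\<Sum>k=0..m. (if k < m then x (k+3) - x 2 * x (k+2) else 1 - x 2 * x (m+2)) * (- (x 2 - p - q * x (m+2)) / ?al) ^ (m - k))
      = (\<Sum>k=0..m. (if k < m then y (k+1) else y (m+1) + ?al) * (?c / ?al) ^ (m - k))"
    proof (rule sum.cong[OF refl])
      fix k assume k: "k \<in> {0..m}"
      have e1: "x (k+3) - x 2 * x (k+2) = y (k+1)" using y[of "k+1"] k by (simp add: add.assoc numeral_3_eq_3)
      have e2: "1 - x 2 * x (m+2) = y (m+1) + ?al" using y[of "m+1"] by (simp add: add.assoc numeral_3_eq_3)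
      have e3: "- (x 2 - p - q * x (m+2)) = ?c" by simp
      show "(if k < m then x (k+3) - x 2 * x (k+2) else 1 - x 2 * x (m+2)) * (- (x 2 - p - q * x (m+2)) / ?al) ^ (m - k)
          = (if k < m then y (k+1) else y (m+1) + ?al) * (?c / ?al) ^ (m - k)"
        unfolding e1 e2 e3 ..
    qed
    then show ?thesis by simp
  qed
  also have "\<dots> = ?al ^ (m+1) + ?c ^ m * (\<Sum>i=1..m+1. y i * (?al / ?c) ^ (i - 1))"
    by (rule conv) (use al0 c0 in auto)
  finally show ?thesis .
qed


lemma fibo_ge: "real k + 1 \<le> fibo (k+2) \<and> real k + 2 \<le> fibo (k+3)"
  by (induction k) (auto simp: numeral_3_eq_3 numeral_2_eq_2)
lemma lucas_ge: "real k + 3 \<le> lucas (k+2) \<and> real k + 4 \<le> lucas (k+3)"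
  by (induction k) (auto simp: numeral_3_eq_3 numeral_2_eq_2)
lemma pell_ge: "real k + 2 \<le> pell (k+2) \<and> real k + 3 \<le> pell (k+3)"
  by (induction k) (auto simp: numeral_3_eq_3 numeral_2_eq_2)
lemma jac_ge: "real k + 1 \<le> jacobsthal (k+2) \<and> real k + 2 \<le> jacobsthal (k+3)"
  by (induction k) (auto simp: numeral_3_eq_3 numeral_2_eq_2)

lemma fibo_rec: "fibo (k+2) = 1 * fibo (k+1) + 1 * fibo k" by (simp add: numeral_2_eq_2)
lemma lucas_rec: "lucas (k+2) = 1 * lucas (k+1) + 1 * lucas k" by (simp add: numeral_2_eq_2)
lemma pell_rec: "pell (k+2) = 2 * pell (k+1) + 1 * pell k" by (simp add: numeral_2_eq_2)
lemma jac_rec: "jacobsthal (k+2) = 1 * jacobsthal (k+1) + 2 * jacobsthal k" by (simp add: numeral_2_eq_2)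


lemma fib_case: "det (gcirc (m+2) 1 (\<lambda>k. fibo (k + 1))) =
           (1 - fibo (m+3)) ^ (m+1) + fibo (m+2) ^ m *
             (\<Sum>i = 1..m+1. fibo i * ((1 - fibo (m+3)) / fibo (m+2)) ^ (i - 1))"
proof -
  have f2: "fibo 2 = 1" by (simp add: numeral_2_eq_2)
  have c: "1 * fibo (m+2) + 1 - fibo 2 = fibo (m+2)" using f2 by simp
  have "det (gcirc (m+2) 1 (\<lambda>k. fibo (k + 1))) = (1 - fibo (m+3)) ^ (m+1) +
     (1 * fibo (m+2) + 1 - fibo 2) ^ m * (\<Sum>i=1..m+1. fibo i * ((1 - fibo (m+3)) / (1 * fibo (m+2) + 1 - fibo 2)) ^ (i - 1))"
    by (rule circ_final[OF _ fibo_rec]) (use fibo_ge[of m] fibo_ge[of "m+1"] f2 fibo_rec in auto)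
  then show ?thesis unfolding c .
qed

lemma lucas_case: "det (gcirc (m+2) 1 (\<lambda>k. lucas (k + 1))) =
           (1 - lucas (m+3)) ^ (m+1) + (lucas (m+2) - 2) ^ m *
             (\<Sum>i = 1..m+1. (lucas (i + 2) - 3 * lucas (i + 1)) *
                ((1 - lucas (m+3)) / (lucas (m+2) - 2)) ^ (i - 1))"
proof -
  have f2: "lucas 2 = 3" by (simp add: numeral_2_eq_2)
  have c: "1 * lucas (m+2) + 1 - lucas 2 = lucas (m+2) - 2" using f2 by simp
  have "det (gcirc (m+2) 1 (\<lambda>k. lucas (k + 1))) = (1 - lucas (m+3)) ^ (m+1) +
     (1 * lucas (m+2) + 1 - lucas 2) ^ m * (\<Sum>i=1..m+1. (lucas (i + 2) - 3 * lucas (i + 1)) * ((1 - lucas (m+3)) / (1 * lucas (m+2) + 1 - lucas 2)) ^ (i - 1))"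
    by (rule circ_final[OF _ lucas_rec]) (use lucas_ge[of m] lucas_ge[of "m+1"] f2 in auto)
  then show ?thesis unfolding c .
qed

lemma pell_case: "det (gcirc (m+2) 1 (\<lambda>k. pell (k + 1))) =
           (1 - pell (m+3)) ^ (m+1) + pell (m+2) ^ m *
             (\<Sum>i = 1..m+1. pell i * ((1 - pell (m+3)) / pell (m+2)) ^ (i - 1))"
proof -
  have f2: "pell 2 = 2" by (simp add: numeral_2_eq_2)
  have c: "1 * pell (m+2) + 2 - pell 2 = pell (m+2)" using f2 by simp
  have "det (gcirc (m+2) 1 (\<lambda>k. pell (k + 1))) = (1 - pell (m+3)) ^ (m+1) +
     (1 * pell (m+2) + 2 - pell 2) ^ m * (\<Sum>i=1..m+1. pell i * ((1 - pell (m+3)) / (1 * pell (m+2) + 2 - pell 2)) ^ (i - 1))"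
    by (rule circ_final[OF _ pell_rec]) (use pell_ge[of m] pell_ge[of "m+1"] f2 pell_rec in auto)
  then show ?thesis unfolding c .
qed

lemma two_pull: "(2 * (a::real)) ^ m * (\<Sum>i\<in>I. (2 * f i) * g i) = 2 ^ (m+1) * a ^ m * (\<Sum>i\<in>I. f i * g i)"
proof -
  have "(\<Sum>i\<in>I. (2 * f i) * g i) = 2 * (\<Sum>i\<in>I. f i * g i)"
    by (simp add: sum_distrib_left mult.assoc)
  then show ?thesis by (simp add: power_mult_distrib)
qed

lemma jac_case: "det (gcirc (m+2) 1 (\<lambda>k. jacobsthal (k + 1))) =
           (1 - jacobsthal (m+3)) ^ (m+1) + 2 ^ (m+1) * jacobsthal (m+2) ^ m *
             (\<Sum>i = 1..m+1. jacobsthal i * ((1 - jacobsthal (m+3)) / (2 * jacobsthal (m+2))) ^ (i - 1))"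
proof -
  have f2: "jacobsthal 2 = 1" by (simp add: numeral_2_eq_2)
  have c: "2 * jacobsthal (m+2) + 1 - jacobsthal 2 = 2 * jacobsthal (m+2)" using f2 by simp
  have "det (gcirc (m+2) 1 (\<lambda>k. jacobsthal (k + 1))) = (1 - jacobsthal (m+3)) ^ (m+1) +
     (2 * jacobsthal (m+2) + 1 - jacobsthal 2) ^ m * (\<Sum>i=1..m+1. (2 * jacobsthal i) * ((1 - jacobsthal (m+3)) / (2 * jacobsthal (m+2) + 1 - jacobsthal 2)) ^ (i - 1))"
    by (rule circ_final[OF _ jac_rec]) (use jac_ge[of m] jac_ge[of "m+1"] f2 jac_rec in auto)
  also have "\<dots> = (1 - jacobsthal (m+3)) ^ (m+1) + 2 ^ (m+1) * jacobsthal (m+2) ^ m *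
             (\<Sum>i = 1..m+1. jacobsthal i * ((1 - jacobsthal (m+3)) / (2 * jacobsthal (m+2))) ^ (i - 1))"
    unfolding c by (rule arg_cong[where f="\<lambda>z. _ + z"], rule two_pull)
  finally show ?thesis .
qed

theorem mainTheorem4:
  fixes n g :: nat
  assumes "n \<ge> 2" and "coprime n g"
  shows "(det (gcirc n g (\<lambda>k. fibo (k + 1))) = det (Qg n g) *
           ((1 - fibo (n + 1)) ^ (n - 1) + fibo n ^ (n - 2) *
             (\<Sum>i = 1..n - 1. fibo i * ((1 - fibo (n + 1)) / fibo n) ^ (i - 1)))) \<and>
        (det (gcirc n g (\<lambda>k. lucas (k + 1))) = det (Qg n g) *
           ((1 - lucas (n + 1)) ^ (n - 1) + (lucas n - 2) ^ (n - 2) *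
             (\<Sum>i = 1..n - 1. (lucas (i + 2) - 3 * lucas (i + 1)) *
                ((1 - lucas (n + 1)) / (lucas n - 2)) ^ (i - 1)))) \<and>
        (det (gcirc n g (\<lambda>k. pell (k + 1))) = det (Qg n g) *
           ((1 - pell (n + 1)) ^ (n - 1) + pell n ^ (n - 2) *
             (\<Sum>i = 1..n - 1. pell i * ((1 - pell (n + 1)) / pell n) ^ (i - 1)))) \<and>
        (det (gcirc n g (\<lambda>k. jacobsthal (k + 1))) = det (Qg n g) *
           ((1 - jacobsthal (n + 1)) ^ (n - 1) + 2 ^ (n - 1) * jacobsthal n ^ (n - 2) *
             (\<Sum>i = 1..n - 1. jacobsthal i *
                ((1 - jacobsthal (n + 1)) / (2 * jacobsthal n)) ^ (i - 1))))"
proof -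
  obtain m where m: "n = m + 2" using assms(1) by (metis le_add_diff_inverse2)
  have n0: "n > 0" using assms(1) by simp
  have e1: "n + 1 = m + 3" "n - 1 = m + 1" "n - 2 = m" using m by auto
  show ?thesis
    unfolding det_gcirc[OF n0, of g] unfolding e1 unfolding m
    unfolding fib_case[of m] lucas_case[of m] pell_case[of m] jac_case[of m] by (intro conjI refl)
qed

end
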